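(* For all nonnegative integers $a,b,c$ (with $E$ taken to be $0$ whenever an argument is negative): $$2(a-b)E(a,b,c)+(a-b+c+1)E(a+1,b,c)+(a-b-c-1)E(a,b+1,c)=0,$$ $$2a\,E(a-1,b,c)+(a-b+c)E(a,b,c)+(c-a-b-1)E(a,b+1,c)=0,$$ $$(a-b)(a+b-c)E(a,b,c)+a(a-b-c-1)E(a-1,b,c)+b(a-b+c+1)E(a,b-1,c)=0,$$ $$(a-b+c+1)(a+b-c+1)E(a+1,b,c)+\big(3a^2+a-(2a+1)(b+c)-(b-c)^2\big)E(a,b,c)+2a(a-b-c-1)E(a-1,b,c)=0.$$
   Context: For nonnegative integers $n_1,\dots,n_S$, $E(n_1,\dots,n_S)$ denotes the number of block derangements: $S$ players hold $n_1,\dots,n_S$ distinct cards respectively; all $N=n_1+\dots+n_S$ cards are redealt so that player $j$ again receives exactly $n_j$ cards (only which cards each player gets matters); $E$ counts the deals in which no player receives any card he originally held. Equivalently, $E(n_1,\dots,n_S)$ is the coefficient of $x_1^{n_1}\cdots x_S^{n_S}$ in $\prod_{j=1}^S(x_1+\dots+x_S-x_j)^{n_j}$. By convention $E(0,\dots,0)=1$. *)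

theory Defs
  imports Main "HOL-Library.FuncSet"
begin

text \<open>Players are 0,...,S-1 where S = length ns; player j originally holds the
cards (j,k) for k < ns!j. A deal assigns each card a receiving player.\<close>

definition cards :: "nat list \<Rightarrow> (nat \<times> nat) set" where
  "cards ns = {(j,k). j < length ns \<and> k < ns ! j}"

definition block_deals :: "nat list \<Rightarrow> ((nat \<times> nat) \<Rightarrow> nat) set" where
  "block_deals ns = {f \<in> cards ns \<rightarrow>\<^sub>E {..<length ns}.
      (\<forall>c \<in> cards ns. f c \<noteq> fst c) \<and>
      (\<forall>j < length ns. card {c \<in> cards ns. f c = j} = ns ! j)}"

definition E :: "nat list \<Rightarrow> nat" where
  "E ns = card (block_deals ns)"

definition E3 :: "int \<Rightarrow> int \<Rightarrow> int \<Rightarrow> int" where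
  "E3 a b c = (if a < 0 \<or> b < 0 \<or> c < 0 then 0 else int (E [nat a, nat b, nat c]))"

end

theory Submission imports Defs Complex_Main
begin


lemma cards3: "cards [a,b,c] = {(j,k). (j=0 \<and> k<a) \<or> (j=1 \<and> k<b) \<or> (j=2 \<and> k<c)}"
  unfolding cards_def by (auto simp: less_Suc_eq numeral_2_eq_2)

lemma finite_cards3: "finite (cards [a,b,c])"
proof -
  have "cards [a,b,c] \<subseteq> {..<3} \<times> {..<a+b+c}" unfolding cards3 by auto
  then show ?thesis by (rule finite_subset) auto
qed

lemma card_two_pairs:
  assumes "finite A" "finite B" "i \<noteq> (j::nat)"
  shows "card (Pair i ` A \<union> Pair j ` (B::nat set)) = card A + card B"
proof -
  have "card (Pair i ` A \<union> Pair j ` B) = card (Pair i ` A) + card (Pair j ` B)"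
    using assms by (intro card_Un_disjoint) auto
  also have "\<dots> = card A + card B" by (simp add: card_image inj_on_def)
  finally show ?thesis .
qed

lemma split_card:
  assumes "\<forall>k<n. P k \<or> Q k" "\<forall>k<n. \<not>(P k \<and> Q k)"
  shows "card {k. k<n \<and> P k} + card {k. k<n \<and> Q k} = (n::nat)"
proof -
  have "card {k. k<n \<and> P k} + card {k. k<n \<and> Q k} = card ({k. k<n \<and> P k} \<union> {k. k<n \<and> Q k})"
    using assms by (intro card_Un_disjoint[symmetric]) auto
  also have "{k. k<n \<and> P k} \<union> {k. k<n \<and> Q k} = {..<n}" using assms by auto
  finally show ?thesis by simp
qed

lemma counts:
  assumes H0: "\<forall>k<a. f(0,k) = 1 \<or> f(0,k) = (2::nat)"
    and H1: "\<forall>k<b. f(1,k) = 0 \<or> f(1,k) = 2" and H2: "\<forall>k<c. f(2,k) = 0 \<or> f(2,k) = 1"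
  shows "card {x \<in> cards [a,b,c]. f x = 0} = card {k. k<b \<and> f(1,k)=0} + card {k. k<c \<and> f(2,k)=0}"
    and "card {x \<in> cards [a,b,c]. f x = 1} = card {k. k<a \<and> f(0,k)=1} + card {k. k<c \<and> f(2,k)=1}"
    and "card {x \<in> cards [a,b,c]. f x = 2} = card {k. k<a \<and> f(0,k)=2} + card {k. k<b \<and> f(1,k)=2}"
proof -
  have "{x \<in> cards [a,b,c]. f x = 0} = Pair 1 ` {k. k<b \<and> f(1,k)=0} \<union> Pair 2 ` {k. k<c \<and> f(2,k)=0}"
    using H0 H1 H2 unfolding cards3 by auto
  then show "card {x \<in> cards [a,b,c]. f x = 0} = card {k. k<b \<and> f(1,k)=0} + card {k. k<c \<and> f(2,k)=0}"
    by (simp add: card_two_pairs)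
  have "{x \<in> cards [a,b,c]. f x = 1} = Pair 0 ` {k. k<a \<and> f(0,k)=1} \<union> Pair 2 ` {k. k<c \<and> f(2,k)=1}"
    using H0 H1 H2 unfolding cards3 by auto
  then show "card {x \<in> cards [a,b,c]. f x = 1} = card {k. k<a \<and> f(0,k)=1} + card {k. k<c \<and> f(2,k)=1}"
    by (simp add: card_two_pairs)
  have "{x \<in> cards [a,b,c]. f x = 2} = Pair 0 ` {k. k<a \<and> f(0,k)=2} \<union> Pair 1 ` {k. k<b \<and> f(1,k)=2}"
    using H0 H1 H2 unfolding cards3 by auto
  then show "card {x \<in> cards [a,b,c]. f x = 2} = card {k. k<a \<and> f(0,k)=2} + card {k. k<b \<and> f(1,k)=2}"
    by (simp add: card_two_pairs)
qed

lemma all3: "(\<forall>j<length [a,b,c::nat]. P j) \<longleftrightarrow> P 0 \<and> P 1 \<and> P 2"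
  by (auto simp: less_Suc_eq numeral_2_eq_2)

definition T3 :: "nat \<Rightarrow> nat \<Rightarrow> nat \<Rightarrow> (nat set \<times> nat set \<times> nat set) set" where
  "T3 a b c = {(X,Y,Z). X \<subseteq> {..<a} \<and> Y \<subseteq> {..<b} \<and> Z \<subseteq> {..<c} \<and> card Y + card Z = a \<and> card X + (c - card Z) = b}"

definition phi :: "nat \<Rightarrow> nat \<Rightarrow> nat \<Rightarrow> (nat \<times> nat \<Rightarrow> nat) \<Rightarrow> nat set \<times> nat set \<times> nat set" where
  "phi a b c f = ({k. k<a \<and> f(0,k)=1}, {k. k<b \<and> f(1,k)=0}, {k. k<c \<and> f(2,k)=0})"

definition psi :: "nat \<Rightarrow> nat \<Rightarrow> nat \<Rightarrow> nat set \<times> nat set \<times> nat set \<Rightarrow> (nat \<times> nat \<Rightarrow> nat)" where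
  "psi a b c t = (\<lambda>(j,k). if (j,k) \<in> cards [a,b,c] then
      (if j=0 then (if k \<in> fst t then 1 else 2) else if j=1 then (if k \<in> fst (snd t) then 0 else 2)
       else (if k \<in> snd (snd t) then 0 else 1)) else undefined)"

lemma bd_char:
  "f \<in> block_deals [a,b,c] \<longleftrightarrow> f \<in> cards [a,b,c] \<rightarrow>\<^sub>E {..<3} \<and> (\<forall>x\<in>cards [a,b,c]. f x \<noteq> fst x) \<and>
     card {x \<in> cards [a,b,c]. f x = 0} = a \<and> card {x \<in> cards [a,b,c]. f x = 1} = b \<and>
     card {x \<in> cards [a,b,c]. f x = 2} = c"
  unfolding block_deals_def all3 by (simp add: numeral_3_eq_3)

lemma bij: "bij_betw (phi a b c) (block_deals [a,b,c]) (T3 a b c)"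
proof (rule bij_betw_byWitness[where f'="psi a b c"])
  show "\<forall>f\<in>block_deals [a,b,c]. psi a b c (phi a b c f) = f"
  proof
    fix f assume f: "f \<in> block_deals [a,b,c]"
    then have fE: "f \<in> cards [a,b,c] \<rightarrow>\<^sub>E {..<3}" and fn: "\<forall>x\<in>cards [a,b,c]. f x \<noteq> fst x"
      by (auto simp: bd_char)
    show "psi a b c (phi a b c f) = f"
    proof
      fix x :: "nat \<times> nat"
      obtain j k where x: "x = (j,k)" by fastforce
      show "psi a b c (phi a b c f) x = f x"
      proof (cases "(j,k) \<in> cards [a,b,c]")
        case True
        have "f (j,k) < 3" "f (j,k) \<noteq> j" using True fE fn by auto
        then show ?thesis using True unfolding x psi_def phi_def cards3
          by (auto simp: less_Suc_eq numeral_2_eq_2 numeral_3_eq_3)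
      next
        case False
        then show ?thesis using fE unfolding x psi_def by (auto simp: PiE_def extensional_def)
      qed
    qed
  qed
next
  show "\<forall>t\<in>T3 a b c. phi a b c (psi a b c t) = t"
    unfolding T3_def phi_def psi_def cards3 by auto
next
  show "phi a b c ` block_deals [a,b,c] \<subseteq> T3 a b c"
  proof
    fix t assume "t \<in> phi a b c ` block_deals [a,b,c]"
    then obtain f where f: "f \<in> block_deals [a,b,c]" and t: "t = phi a b c f" by auto
    have fE: "f \<in> cards [a,b,c] \<rightarrow>\<^sub>E {..<3}" and fn: "\<forall>x\<in>cards [a,b,c]. f x \<noteq> fst x"
      and c0: "card {x \<in> cards [a,b,c]. f x = 0} = a" and c1: "card {x \<in> cards [a,b,c]. f x = 1} = b"
      using f by (auto simp: bd_char)
    have H: "\<forall>j k. (j,k) \<in> cards [a,b,c] \<longrightarrow> f (j,k) < (3::nat) \<and> f (j,k) \<noteq> j"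
      using fE fn by fastforce
    have H0: "\<forall>k<a. f(0,k) = 1 \<or> f(0,k) = 2"
    proof (intro allI impI)
      fix k assume "k < a"
      then have "(0,k) \<in> cards [a,b,c]" by (simp add: cards3)
      then have "f(0,k) < 3" "f(0,k) \<noteq> 0" using H by auto
      then show "f(0,k) = 1 \<or> f(0,k) = 2" by arith
    qed
    have H1: "\<forall>k<b. f(1,k) = 0 \<or> f(1,k) = 2"
    proof (intro allI impI)
      fix k assume "k < b"
      then have "(1,k) \<in> cards [a,b,c]" by (simp add: cards3)
      then have "f(1,k) < 3" "f(1,k) \<noteq> 1" using H by auto
      then show "f(1,k) = 0 \<or> f(1,k) = 2" by arith
    qed
    have H2: "\<forall>k<c. f(2,k) = 0 \<or> f(2,k) = 1"
    proof (intro allI impI)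
      fix k assume "k < c"
      then have "(2,k) \<in> cards [a,b,c]" by (simp add: cards3)
      then have "f(2,k) < 3" "f(2,k) \<noteq> 2" using H by auto
      then show "f(2,k) = 0 \<or> f(2,k) = 1" by arith
    qed
    have sc: "card {k. k<c \<and> f(2,k)=0} + card {k. k<c \<and> f(2,k)=1} = c"
    proof (rule split_card)
      show "\<forall>k<c. f (2,k) = 0 \<or> f (2,k) = 1" using H2 by auto
    qed auto
    show "t \<in> T3 a b c" unfolding t T3_def phi_def
      using counts(1)[OF H0 H1 H2] counts(2)[OF H0 H1 H2] c0 c1 sc by auto
  qed
next
  show "psi a b c ` T3 a b c \<subseteq> block_deals [a,b,c]"
  proof
    fix f assume "f \<in> psi a b c ` T3 a b c"
    then obtain X Y Z where t: "(X,Y,Z) \<in> T3 a b c" and f: "f = psi a b c (X,Y,Z)" by auto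
    have XYZ: "X \<subseteq> {..<a}" "Y \<subseteq> {..<b}" "Z \<subseteq> {..<c}" "card Y + card Z = a" "card X + (c - card Z) = b"
      using t by (auto simp: T3_def)
    have H: "\<forall>j k. (j,k) \<in> cards [a,b,c] \<longrightarrow> f (j,k) < (3::nat) \<and> f (j,k) \<noteq> j"
      unfolding f psi_def by auto
    have H0: "\<forall>k<a. f(0,k) = 1 \<or> f(0,k) = 2" and H1: "\<forall>k<b. f(1,k) = 0 \<or> f(1,k) = 2"
      and H2: "\<forall>k<c. f(2,k) = 0 \<or> f(2,k) = 1" unfolding f psi_def cards3 by auto
    have fE: "f \<in> cards [a,b,c] \<rightarrow>\<^sub>E {..<3}" using H unfolding f psi_def by (auto simp: PiE_def extensional_def)
    have fn: "\<forall>x\<in>cards [a,b,c]. f x \<noteq> fst x" using H by auto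
    have e1: "{k. k<b \<and> f(1,k)=0} = Y" "{k. k<c \<and> f(2,k)=0} = Z" "{k. k<a \<and> f(0,k)=1} = X"
      using XYZ unfolding f psi_def cards3 by auto
    have e2: "{k. k<c \<and> f(2,k)=1} = {k. k<c \<and> k \<notin> Z}" "{k. k<a \<and> f(0,k)=2} = {k. k<a \<and> k \<notin> X}"
      "{k. k<b \<and> f(1,k)=2} = {k. k<b \<and> k \<notin> Y}"
      unfolding f psi_def cards3 by auto
    have s1: "card Z + card {k. k<c \<and> k \<notin> Z} = c"
      using split_card[of c "\<lambda>k. k \<in> Z" "\<lambda>k. k \<notin> Z"] XYZ(3) by (auto simp: Collect_conj_eq Int_absorb1 lessThan_def[symmetric])
    have s2: "card X + card {k. k<a \<and> k \<notin> X} = a"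
      using split_card[of a "\<lambda>k. k \<in> X" "\<lambda>k. k \<notin> X"] XYZ(1) by (auto simp: Collect_conj_eq Int_absorb1 lessThan_def[symmetric])
    have s3: "card Y + card {k. k<b \<and> k \<notin> Y} = b"
      using split_card[of b "\<lambda>k. k \<in> Y" "\<lambda>k. k \<notin> Y"] XYZ(2) by (auto simp: Collect_conj_eq Int_absorb1 lessThan_def[symmetric])
    show "f \<in> block_deals [a,b,c]" unfolding bd_char
      using fE fn counts[OF H0 H1 H2] e1 e2 s1 s2 s3 XYZ(4,5) by auto
  qed
qed



definition rf :: "int \<Rightarrow> real" where "rf n = (if n < 0 then 0 else 1 / fact (nat n))"

lemma rfm: "rf (n - 1) = of_int n * rf n"
proof (cases "n \<ge> 1")
  case True
  define m where "m = nat (n-1)"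
  have m: "n = int m + 1" using True m_def by simp
  have "nat n = Suc m" using m by simp
  have e1: "rf (n-1) = 1 / fact m" using m by (simp add: rf_def)
  have e2: "rf n = 1 / ((real m + 1) * fact m)" using m \<open>nat n = Suc m\<close> by (simp add: rf_def)
  have "(fact m::real) > 0" by simp
  have "of_int n * rf n = (real m + 1) / ((real m + 1) * fact m)" using m e2 by simp
  also have "\<dots> = 1 / fact m" by (simp add: divide_simps)
  finally show ?thesis using e1 by simp
next
  case False
  then show ?thesis by (auto simp: rf_def)
qed

lemma rf_sh: "m = n - 1 \<Longrightarrow> rf m = of_int n * rf n" using rfm by simp

lemma rf_sh2: "m = n - 2 \<Longrightarrow> rf m = of_int (n - 1) * of_int n * rf n"
  using rfm[of "n-1"] rfm[of n] by simp

definition P :: "int\<Rightarrow>int\<Rightarrow>int\<Rightarrow>int\<Rightarrow>real" where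
 "P a b c x = rf x * rf (a-x) * rf (x+c-a) * rf (a+b-c-x) * rf (b-x) * rf (x+c-b)"

definition G1 :: "int\<Rightarrow>int\<Rightarrow>int\<Rightarrow>int\<Rightarrow>real" where
 "G1 a b c x = of_int (a - b) * rf (((x)) - 1) * rf ((a) - (x) + 1) * rf (((x) + (c) - (a)) - 1) * rf ((a) + (b) - (c) - (x) + 1) * rf ((b) - (x) + 1) * rf (((x) + (c) - (b)) - 1)"

lemma G1_pt: "of_int (2*(a-b)) * P (a) (b) (c) x + of_int ((a-b+c+1)*(a+1)) * P (a + 1) (b) (c) x + of_int ((a-b-c-1)*(b+1)) * P (a) (b + 1) (c) x = G1 a b c (x + 1) - G1 a b c x"
proof -
  have h0: "rf ((a) - (x)) = of_int ((a) - (x) + 1) * rf ((a) - (x) + 1)" by (rule rf_sh) simp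
  have h1: "rf ((a) + (b) - (c) - (x)) = of_int ((a) + (b) - (c) - (x) + 1) * rf ((a) + (b) - (c) - (x) + 1)" by (rule rf_sh) simp
  have h2: "rf ((b) - (x)) = of_int ((b) - (x) + 1) * rf ((b) - (x) + 1)" by (rule rf_sh) simp
  have h3: "rf ((a + 1) - (x)) = rf ((a) - (x) + 1)" by (rule arg_cong[of _ _ rf]) simp
  have h4: "rf ((x) + (c) - (a + 1)) = of_int ((x) + (c) - (a)) * rf ((x) + (c) - (a))" by (rule rf_sh) simp
  have h5: "rf ((a + 1) + (b) - (c) - (x)) = rf ((a) + (b) - (c) - (x) + 1)" by (rule arg_cong[of _ _ rf]) simp
  have h6: "rf ((a) + (b + 1) - (c) - (x)) = rf ((a) + (b) - (c) - (x) + 1)" by (rule arg_cong[of _ _ rf]) simp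
  have h7: "rf ((b + 1) - (x)) = rf ((b) - (x) + 1)" by (rule arg_cong[of _ _ rf]) simp
  have h8: "rf ((x) + (c) - (b + 1)) = of_int ((x) + (c) - (b)) * rf ((x) + (c) - (b))" by (rule rf_sh) simp
  have h9: "rf ((((x))) - 1) = of_int ((x)) * rf ((x))" by (rule rf_sh) simp
  have h10: "rf ((((x)) + (c) - (a)) - 1) = of_int ((x) + (c) - (a)) * rf ((x) + (c) - (a))" by (rule rf_sh) simp
  have h11: "rf ((((x)) + (c) - (b)) - 1) = of_int ((x) + (c) - (b)) * rf ((x) + (c) - (b))" by (rule rf_sh) simp
  have h12: "rf (((((x + 1)))) - 1) = rf ((x))" by (rule arg_cong[of _ _ rf]) simp
  have h13: "rf ((a) - (((x + 1))) + 1) = of_int ((a) - (x) + 1) * rf ((a) - (x) + 1)" by (rule rf_sh) simp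
  have h14: "rf (((((x + 1))) + (c) - (a)) - 1) = rf ((x) + (c) - (a))" by (rule arg_cong[of _ _ rf]) simp
  have h15: "rf ((a) + (b) - (c) - (((x + 1))) + 1) = of_int ((a) + (b) - (c) - (x) + 1) * rf ((a) + (b) - (c) - (x) + 1)" by (rule rf_sh) simp
  have h16: "rf ((b) - (((x + 1))) + 1) = of_int ((b) - (x) + 1) * rf ((b) - (x) + 1)" by (rule rf_sh) simp
  have h17: "rf (((((x + 1))) + (c) - (b)) - 1) = rf ((x) + (c) - (b))" by (rule arg_cong[of _ _ rf]) simp
  show ?thesis unfolding P_def G1_def
    apply (simp only: h0 h1 h2 h3 h4 h5 h6 h7 h8 h9 h10 h11 h12 h13 h14 h15 h16 h17)
    apply (simp only: of_int_add of_int_diff of_int_mult of_int_1 of_int_numeral of_int_power of_int_minus)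
    by algebra
qed

definition G2 :: "int\<Rightarrow>int\<Rightarrow>int\<Rightarrow>int\<Rightarrow>real" where
 "G2 a b c x = of_int (a + 2*b - c - x + 2) * rf (((x)) - 1) * rf ((a) - (x)) * rf (((x) + (c) - (a) + 1) - 1) * rf ((a) + (b) - (c) - (x) + 1) * rf ((b) - (x) + 1) * rf (((x) + (c) - (b)) - 1)"

lemma G2_pt: "of_int (2) * P (a - 1) (b) (c) x + of_int (a-b+c) * P (a) (b) (c) x + of_int ((c-a-b-1)*(b+1)) * P (a) (b + 1) (c) x = G2 a b c (x + 1) - G2 a b c x"
proof -
  have h0: "rf ((a - 1) - (x)) = of_int ((a) - (x)) * rf ((a) - (x))" by (rule rf_sh) simp
  have h1: "rf ((x) + (c) - (a - 1)) = rf ((x) + (c) - (a) + 1)" by (rule arg_cong[of _ _ rf]) simp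
  have h2: "rf ((a - 1) + (b) - (c) - (x)) = of_int ((a) + (b) - (c) - (x) + 1 - 1) * of_int ((a) + (b) - (c) - (x) + 1) * rf ((a) + (b) - (c) - (x) + 1)" by (rule rf_sh2) simp
  have h3: "rf ((b) - (x)) = of_int ((b) - (x) + 1) * rf ((b) - (x) + 1)" by (rule rf_sh) simp
  have h4: "rf ((x) + (c) - (a)) = of_int ((x) + (c) - (a) + 1) * rf ((x) + (c) - (a) + 1)" by (rule rf_sh) simp
  have h5: "rf ((a) + (b) - (c) - (x)) = of_int ((a) + (b) - (c) - (x) + 1) * rf ((a) + (b) - (c) - (x) + 1)" by (rule rf_sh) simp
  have h6: "rf ((a) + (b + 1) - (c) - (x)) = rf ((a) + (b) - (c) - (x) + 1)" by (rule arg_cong[of _ _ rf]) simp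
  have h7: "rf ((b + 1) - (x)) = rf ((b) - (x) + 1)" by (rule arg_cong[of _ _ rf]) simp
  have h8: "rf ((x) + (c) - (b + 1)) = of_int ((x) + (c) - (b)) * rf ((x) + (c) - (b))" by (rule rf_sh) simp
  have h9: "rf ((((x))) - 1) = of_int ((x)) * rf ((x))" by (rule rf_sh) simp
  have h10: "rf ((((x)) + (c) - (a) + 1) - 1) = of_int ((x) + (c) - (a) + 1) * rf ((x) + (c) - (a) + 1)" by (rule rf_sh) simp
  have h11: "rf ((((x)) + (c) - (b)) - 1) = of_int ((x) + (c) - (b)) * rf ((x) + (c) - (b))" by (rule rf_sh) simp
  have h12: "rf (((((x + 1)))) - 1) = rf ((x))" by (rule arg_cong[of _ _ rf]) simp
  have h13: "rf ((a) - (((x + 1)))) = of_int ((a) - (x)) * rf ((a) - (x))" by (rule rf_sh) simp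
  have h14: "rf (((((x + 1))) + (c) - (a) + 1) - 1) = rf ((x) + (c) - (a) + 1)" by (rule arg_cong[of _ _ rf]) simp
  have h15: "rf ((a) + (b) - (c) - (((x + 1))) + 1) = of_int ((a) + (b) - (c) - (x) + 1) * rf ((a) + (b) - (c) - (x) + 1)" by (rule rf_sh) simp
  have h16: "rf ((b) - (((x + 1))) + 1) = of_int ((b) - (x) + 1) * rf ((b) - (x) + 1)" by (rule rf_sh) simp
  have h17: "rf (((((x + 1))) + (c) - (b)) - 1) = rf ((x) + (c) - (b))" by (rule arg_cong[of _ _ rf]) simp
  show ?thesis unfolding P_def G2_def
    apply (simp only: h0 h1 h2 h3 h4 h5 h6 h7 h8 h9 h10 h11 h12 h13 h14 h15 h16 h17)
    apply (simp only: of_int_add of_int_diff of_int_mult of_int_1 of_int_numeral of_int_power of_int_minus)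
    by algebra
qed

definition G3 :: "int\<Rightarrow>int\<Rightarrow>int\<Rightarrow>int\<Rightarrow>real" where
 "G3 a b c x = of_int (b - a) * rf (((x)) - 1) * rf ((a) - (x)) * rf (((x) + (c) - (a) + 1) - 1) * rf ((a) + (b) - (c) - (x)) * rf ((b) - (x)) * rf (((x) + (c) - (b) + 1) - 1)"

lemma G3_pt: "of_int ((a-b)*(a+b-c)) * P (a) (b) (c) x + of_int (a-b-c-1) * P (a - 1) (b) (c) x + of_int (a-b+c+1) * P (a) (b - 1) (c) x = G3 a b c (x + 1) - G3 a b c x"
proof -
  have h0: "rf ((x) + (c) - (a)) = of_int ((x) + (c) - (a) + 1) * rf ((x) + (c) - (a) + 1)" by (rule rf_sh) simp
  have h1: "rf ((x) + (c) - (b)) = of_int ((x) + (c) - (b) + 1) * rf ((x) + (c) - (b) + 1)" by (rule rf_sh) simp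
  have h2: "rf ((a - 1) - (x)) = of_int ((a) - (x)) * rf ((a) - (x))" by (rule rf_sh) simp
  have h3: "rf ((x) + (c) - (a - 1)) = rf ((x) + (c) - (a) + 1)" by (rule arg_cong[of _ _ rf]) simp
  have h4: "rf ((a - 1) + (b) - (c) - (x)) = of_int ((a) + (b) - (c) - (x)) * rf ((a) + (b) - (c) - (x))" by (rule rf_sh) simp
  have h5: "rf ((a) + (b - 1) - (c) - (x)) = of_int ((a) + (b) - (c) - (x)) * rf ((a) + (b) - (c) - (x))" by (rule rf_sh) simp
  have h6: "rf ((b - 1) - (x)) = of_int ((b) - (x)) * rf ((b) - (x))" by (rule rf_sh) simp
  have h7: "rf ((x) + (c) - (b - 1)) = rf ((x) + (c) - (b) + 1)" by (rule arg_cong[of _ _ rf]) simp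
  have h8: "rf ((((x))) - 1) = of_int ((x)) * rf ((x))" by (rule rf_sh) simp
  have h9: "rf ((((x)) + (c) - (a) + 1) - 1) = of_int ((x) + (c) - (a) + 1) * rf ((x) + (c) - (a) + 1)" by (rule rf_sh) simp
  have h10: "rf ((((x)) + (c) - (b) + 1) - 1) = of_int ((x) + (c) - (b) + 1) * rf ((x) + (c) - (b) + 1)" by (rule rf_sh) simp
  have h11: "rf (((((x + 1)))) - 1) = rf ((x))" by (rule arg_cong[of _ _ rf]) simp
  have h12: "rf ((a) - (((x + 1)))) = of_int ((a) - (x)) * rf ((a) - (x))" by (rule rf_sh) simp
  have h13: "rf (((((x + 1))) + (c) - (a) + 1) - 1) = rf ((x) + (c) - (a) + 1)" by (rule arg_cong[of _ _ rf]) simp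
  have h14: "rf ((a) + (b) - (c) - (((x + 1)))) = of_int ((a) + (b) - (c) - (x)) * rf ((a) + (b) - (c) - (x))" by (rule rf_sh) simp
  have h15: "rf ((b) - (((x + 1)))) = of_int ((b) - (x)) * rf ((b) - (x))" by (rule rf_sh) simp
  have h16: "rf (((((x + 1))) + (c) - (b) + 1) - 1) = rf ((x) + (c) - (b) + 1)" by (rule arg_cong[of _ _ rf]) simp
  show ?thesis unfolding P_def G3_def
    apply (simp only: h0 h1 h2 h3 h4 h5 h6 h7 h8 h9 h10 h11 h12 h13 h14 h15 h16)
    apply (simp only: of_int_add of_int_diff of_int_mult of_int_1 of_int_numeral of_int_power of_int_minus)
    by algebra
qed

definition G4 :: "int\<Rightarrow>int\<Rightarrow>int\<Rightarrow>int\<Rightarrow>real" where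
 "G4 a b c x = of_int (-2 + x - c + c*x + c^2 - 2*b + b*x - b*c - a - a*x - 2*a*c - a*b + a^2) * rf (((x)) - 1) * rf ((a) - (x) + 1) * rf (((x) + (c) - (a) + 1) - 1) * rf ((a) + (b) - (c) - (x) + 1) * rf ((b) - (x)) * rf (((x) + (c) - (b)) - 1)"

lemma G4_pt: "of_int ((a-b+c+1)*(a+b-c+1)*(a+1)) * P (a + 1) (b) (c) x + of_int (3*a^2+a-(2*a+1)*(b+c)-(b-c)^2) * P (a) (b) (c) x + of_int (2*(a-b-c-1)) * P (a - 1) (b) (c) x = G4 a b c (x + 1) - G4 a b c x"
proof -
  have h0: "rf ((a + 1) - (x)) = rf ((a) - (x) + 1)" by (rule arg_cong[of _ _ rf]) simp
  have h1: "rf ((x) + (c) - (a + 1)) = of_int ((x) + (c) - (a) + 1 - 1) * of_int ((x) + (c) - (a) + 1) * rf ((x) + (c) - (a) + 1)" by (rule rf_sh2) simp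
  have h2: "rf ((a + 1) + (b) - (c) - (x)) = rf ((a) + (b) - (c) - (x) + 1)" by (rule arg_cong[of _ _ rf]) simp
  have h3: "rf ((a) - (x)) = of_int ((a) - (x) + 1) * rf ((a) - (x) + 1)" by (rule rf_sh) simp
  have h4: "rf ((x) + (c) - (a)) = of_int ((x) + (c) - (a) + 1) * rf ((x) + (c) - (a) + 1)" by (rule rf_sh) simp
  have h5: "rf ((a) + (b) - (c) - (x)) = of_int ((a) + (b) - (c) - (x) + 1) * rf ((a) + (b) - (c) - (x) + 1)" by (rule rf_sh) simp
  have h6: "rf ((a - 1) - (x)) = of_int ((a) - (x) + 1 - 1) * of_int ((a) - (x) + 1) * rf ((a) - (x) + 1)" by (rule rf_sh2) simp
  have h7: "rf ((x) + (c) - (a - 1)) = rf ((x) + (c) - (a) + 1)" by (rule arg_cong[of _ _ rf]) simp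
  have h8: "rf ((a - 1) + (b) - (c) - (x)) = of_int ((a) + (b) - (c) - (x) + 1 - 1) * of_int ((a) + (b) - (c) - (x) + 1) * rf ((a) + (b) - (c) - (x) + 1)" by (rule rf_sh2) simp
  have h9: "rf ((((x))) - 1) = of_int ((x)) * rf ((x))" by (rule rf_sh) simp
  have h10: "rf ((((x)) + (c) - (a) + 1) - 1) = of_int ((x) + (c) - (a) + 1) * rf ((x) + (c) - (a) + 1)" by (rule rf_sh) simp
  have h11: "rf ((((x)) + (c) - (b)) - 1) = of_int ((x) + (c) - (b)) * rf ((x) + (c) - (b))" by (rule rf_sh) simp
  have h12: "rf (((((x + 1)))) - 1) = rf ((x))" by (rule arg_cong[of _ _ rf]) simp
  have h13: "rf ((a) - (((x + 1))) + 1) = of_int ((a) - (x) + 1) * rf ((a) - (x) + 1)" by (rule rf_sh) simp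
  have h14: "rf (((((x + 1))) + (c) - (a) + 1) - 1) = rf ((x) + (c) - (a) + 1)" by (rule arg_cong[of _ _ rf]) simp
  have h15: "rf ((a) + (b) - (c) - (((x + 1))) + 1) = of_int ((a) + (b) - (c) - (x) + 1) * rf ((a) + (b) - (c) - (x) + 1)" by (rule rf_sh) simp
  have h16: "rf ((b) - (((x + 1)))) = of_int ((b) - (x)) * rf ((b) - (x))" by (rule rf_sh) simp
  have h17: "rf (((((x + 1))) + (c) - (b)) - 1) = rf ((x) + (c) - (b))" by (rule arg_cong[of _ _ rf]) simp
  show ?thesis unfolding P_def G4_def
    apply (simp only: h0 h1 h2 h3 h4 h5 h6 h7 h8 h9 h10 h11 h12 h13 h14 h15 h16 h17)
    apply (simp only: of_int_add of_int_diff of_int_mult of_int_1 of_int_numeral of_int_power of_int_minus)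
    by algebra
qed


definition Qs :: "nat \<Rightarrow> nat \<Rightarrow> nat \<Rightarrow> nat \<Rightarrow> (nat set \<times> nat set) set" where
  "Qs a b c x = {(Y,Z). Y \<subseteq> {..<b} \<and> Z \<subseteq> {..<c} \<and> card Y + card Z = a \<and> x + (c - card Z) = b}"

lemma card_le_n: "Z \<subseteq> {..<c} \<Longrightarrow> card Z \<le> (c::nat)"
  using card_mono[of "{..<c}" Z] by simp

lemma T3_decomp: "T3 a b c = (\<Union>x\<in>{0..a}. {X. X \<subseteq> {..<a} \<and> card X = x} \<times> Qs a b c x)"
  unfolding T3_def Qs_def by (auto dest: card_le_n)

lemma card_Qs: "card (Qs a b c x) = (if b \<le> x + c \<and> x + c - b \<le> a
   then (c choose (x+c-b)) * (b choose (a - (x+c-b))) else 0)"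
proof (cases "b \<le> x + c \<and> x + c - b \<le> a")
  case True
  have "Qs a b c x = {Y. Y \<subseteq> {..<b} \<and> card Y = a - (x+c-b)} \<times> {Z. Z \<subseteq> {..<c} \<and> card Z = x+c-b}"
    unfolding Qs_def using True by (auto dest: card_le_n)
  then show ?thesis using True by (simp add: card_cartesian_product n_subsets)
next
  case False
  have "Qs a b c x = {}"
    unfolding Qs_def using False by (auto dest: card_le_n)
  then show ?thesis unfolding if_not_P[OF False] by simp
qed

lemma card_T3: "card (T3 a b c) = (\<Sum>x\<in>{0..a}. (a choose x) * card (Qs a b c x))"
proof -
  have fQ: "finite (Qs a b c x)" for x
  proof (rule finite_subset)
    show "Qs a b c x \<subseteq> Pow {..<b} \<times> Pow {..<c}" unfolding Qs_def by auto
  qed auto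
  have fX: "finite {X. X \<subseteq> {..<a} \<and> card X = x}" for x
    by (rule finite_subset[of _ "Pow {..<a}"]) auto
  have "card (T3 a b c) = (\<Sum>x\<in>{0..a}. card ({X. X \<subseteq> {..<a} \<and> card X = x} \<times> Qs a b c x))"
    unfolding T3_decomp by (rule card_UN_disjoint) (auto simp: fQ fX)
  also have "\<dots> = (\<Sum>x\<in>{0..a}. (a choose x) * card (Qs a b c x))"
    by (simp add: card_cartesian_product n_subsets)
  finally show ?thesis .
qed

lemma choose_rf: "real (n choose k) = fact n * rf (int k) * rf (int n - int k)"
proof (cases "k \<le> n")
  case True
  have "nat (int n - int k) = n - k" using True by simp
  then show ?thesis using True by (simp add: binomial_fact rf_def)
next
  case False
  then show ?thesis by (simp add: rf_def)
qed

lemma term_rf: "real ((a choose x) * card (Qs a b c x)) =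
   fact a * fact b * fact c * P (int a) (int b) (int c) (int x)"
proof (cases "b \<le> x + c \<and> x + c - b \<le> a")
  case True
  have i1: "int (x + c - b) = int x + int c - int b" using True by simp
  have i2: "int (a + b - (x + c)) = int a + int b - int c - int x" using True by presburger
  have i3: "int b - (int a + int b - int c - int x) = int x + int c - int a" by simp
  have i4: "int c - (int x + int c - int b) = int b - int x" by simp
  show ?thesis using True unfolding card_Qs P_def
    by (simp add: choose_rf i1 i2 i3 i4 del: of_nat_diff)
next
  case False
  then have "int x + int c - int b < 0 \<or> int a + int b - int c - int x < 0" by auto
  then have "P (int a) (int b) (int c) (int x) = 0" unfolding P_def rf_def by auto
  then show ?thesis unfolding card_Qs if_not_P[OF False] by simp
qed

definition S :: "int \<Rightarrow> int \<Rightarrow> int \<Rightarrow> real" where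
  "S a b c = (\<Sum>x\<in>{0..a}. P a b c x)"

lemma E_real: "real (E [a,b,c]) = fact a * fact b * fact c * S (int a) (int b) (int c)"
proof -
  have "E [a,b,c] = card (T3 a b c)" unfolding E_def using bij by (rule bij_betw_same_card)
  then have "real (E [a,b,c]) = (\<Sum>x\<in>{0..a}. real ((a choose x) * card (Qs a b c x)))"
    by (simp add: card_T3 del: of_nat_mult)
  also have "\<dots> = (\<Sum>x\<in>{0..a}. fact a * fact b * fact c * P (int a) (int b) (int c) (int x))"
    by (simp only: term_rf)
  also have "\<dots> = fact a * fact b * fact c * (\<Sum>x\<in>int ` {0..a}. P (int a) (int b) (int c) x)"
    by (simp add: sum_distrib_left sum.reindex)
  also have "int ` {0..a} = {0..int a}" by (simp add: image_int_atLeastAtMost)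
  finally show ?thesis unfolding S_def .
qed


lemma S_ext: "a \<le> N \<Longrightarrow> (\<Sum>x\<in>{0..N}. P a b c x) = S a b c"
  unfolding S_def
  by (rule sum.mono_neutral_right) (auto simp: P_def rf_def)

lemma tele_nat: fixes f :: "int \<Rightarrow> real" shows "(\<Sum>x\<in>{0..int n}. f (x+1) - f x) = f (int n + 1) - (f 0 :: real)"
proof (induction n)
  case 0
  then show ?case by simp
next
  case (Suc n)
  have "{0..int (Suc n)} = insert (int n + 1) {0..int n}" by auto
  then show ?case using Suc by simp
qed

lemma tele: fixes f :: "int \<Rightarrow> real" shows "0 \<le> N \<Longrightarrow> (\<Sum>x\<in>{0..N}. f (x+1) - f x) = f (N + 1) - (f 0 :: real)"
  using tele_nat[of f "nat N"] by simp

lemma S_neg_a: "a < 0 \<Longrightarrow> S a b c = 0" unfolding S_def by simp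
lemma S_neg_b: "b < 0 \<Longrightarrow> S a b c = 0" unfolding S_def P_def rf_def
  by (intro sum.neutral) auto

lemma R1: assumes "0 \<le> a"
  shows "of_int (2*(a-b)) * S a b c + of_int ((a-b+c+1)*(a+1)) * S (a + 1) b c + of_int ((a-b-c-1)*(b+1)) * S a (b + 1) c = 0"
proof -
  have "of_int (2*(a-b)) * S a b c + of_int ((a-b+c+1)*(a+1)) * S (a + 1) b c + of_int ((a-b-c-1)*(b+1)) * S a (b + 1) c
     = (\<Sum>x\<in>{0..a+1}. of_int (2*(a-b)) * P (a) (b) (c) x + of_int ((a-b+c+1)*(a+1)) * P (a + 1) (b) (c) x + of_int ((a-b-c-1)*(b+1)) * P (a) (b + 1) (c) x)"
    by (simp add: sum.distrib sum_distrib_left[symmetric] S_ext del: of_int_mult of_int_add of_int_diff of_int_power of_int_numeral)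
  also have "\<dots> = (\<Sum>x\<in>{0..a+1}. G1 a b c (x+1) - G1 a b c x)" by (simp only: G1_pt)
  also have "\<dots> = G1 a b c (a + 1 + 1) - G1 a b c 0" using assms by (intro tele) simp
  also have "\<dots> = 0" by (simp add: G1_def rf_def)
  finally show ?thesis .
qed

lemma R2: assumes "0 \<le> a"
  shows "of_int (2) * S (a - 1) b c + of_int (a-b+c) * S a b c + of_int ((c-a-b-1)*(b+1)) * S a (b + 1) c = 0"
proof -
  have "of_int (2) * S (a - 1) b c + of_int (a-b+c) * S a b c + of_int ((c-a-b-1)*(b+1)) * S a (b + 1) c
     = (\<Sum>x\<in>{0..a}. of_int (2) * P (a - 1) (b) (c) x + of_int (a-b+c) * P (a) (b) (c) x + of_int ((c-a-b-1)*(b+1)) * P (a) (b + 1) (c) x)"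
    by (simp add: sum.distrib sum_distrib_left[symmetric] S_ext del: of_int_mult of_int_add of_int_diff of_int_power of_int_numeral)
  also have "\<dots> = (\<Sum>x\<in>{0..a}. G2 a b c (x+1) - G2 a b c x)" by (simp only: G2_pt)
  also have "\<dots> = G2 a b c (a + 1) - G2 a b c 0" using assms by (intro tele) simp
  also have "\<dots> = 0" by (simp add: G2_def rf_def)
  finally show ?thesis .
qed

lemma R3: assumes "0 \<le> a"
  shows "of_int ((a-b)*(a+b-c)) * S a b c + of_int (a-b-c-1) * S (a - 1) b c + of_int (a-b+c+1) * S a (b - 1) c = 0"
proof -
  have "of_int ((a-b)*(a+b-c)) * S a b c + of_int (a-b-c-1) * S (a - 1) b c + of_int (a-b+c+1) * S a (b - 1) c
     = (\<Sum>x\<in>{0..a}. of_int ((a-b)*(a+b-c)) * P (a) (b) (c) x + of_int (a-b-c-1) * P (a - 1) (b) (c) x + of_int (a-b+c+1) * P (a) (b - 1) (c) x)"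
    by (simp add: sum.distrib sum_distrib_left[symmetric] S_ext del: of_int_mult of_int_add of_int_diff of_int_power of_int_numeral)
  also have "\<dots> = (\<Sum>x\<in>{0..a}. G3 a b c (x+1) - G3 a b c x)" by (simp only: G3_pt)
  also have "\<dots> = G3 a b c (a + 1) - G3 a b c 0" using assms by (intro tele) simp
  also have "\<dots> = 0" by (simp add: G3_def rf_def)
  finally show ?thesis .
qed

lemma R4: assumes "0 \<le> a"
  shows "of_int ((a-b+c+1)*(a+b-c+1)*(a+1)) * S (a + 1) b c + of_int (3*a^2+a-(2*a+1)*(b+c)-(b-c)^2) * S a b c + of_int (2*(a-b-c-1)) * S (a - 1) b c = 0"
proof -
  have "of_int ((a-b+c+1)*(a+b-c+1)*(a+1)) * S (a + 1) b c + of_int (3*a^2+a-(2*a+1)*(b+c)-(b-c)^2) * S a b c + of_int (2*(a-b-c-1)) * S (a - 1) b c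
     = (\<Sum>x\<in>{0..a+1}. of_int ((a-b+c+1)*(a+b-c+1)*(a+1)) * P (a + 1) (b) (c) x + of_int (3*a^2+a-(2*a+1)*(b+c)-(b-c)^2) * P (a) (b) (c) x + of_int (2*(a-b-c-1)) * P (a - 1) (b) (c) x)"
    by (simp add: sum.distrib sum_distrib_left[symmetric] S_ext del: of_int_mult of_int_add of_int_diff of_int_power of_int_numeral)
  also have "\<dots> = (\<Sum>x\<in>{0..a+1}. G4 a b c (x+1) - G4 a b c x)" by (simp only: G4_pt)
  also have "\<dots> = G4 a b c (a + 1 + 1) - G4 a b c 0" using assms by (intro tele) simp
  also have "\<dots> = 0" by (simp add: G4_def rf_def)
  finally show ?thesis .
qed

lemma E3_S: assumes "0 \<le> a" "0 \<le> b" "0 \<le> c"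
  shows "real_of_int (E3 a b c) = fact (nat a) * fact (nat b) * fact (nat c) * S a b c"
  using E_real[of "nat a" "nat b" "nat c"] assms by (simp add: E3_def)

lemma fact_int_Suc: "0 \<le> a \<Longrightarrow> (fact (nat (a+1)) :: real) = of_int (a+1) * fact (nat a)"
proof -
  assume "0 \<le> a"
  then have "nat (a+1) = Suc (nat a)" by simp
  then show ?thesis using \<open>0 \<le> a\<close> by simp
qed

lemma E3_am1: assumes "0 \<le> a" "0 \<le> b" "0 \<le> c"
  shows "real_of_int (a * E3 (a - 1) b c) = fact (nat a) * fact (nat b) * fact (nat c) * S (a - 1) b c"
proof (cases "a = 0")
  case True
  then show ?thesis by (simp add: E3_def S_neg_a)
next
  case False
  then have a1: "0 \<le> a - 1" using assms by simp
  have "fact (nat a) = (fact (nat (a - 1 + 1)) :: real)" by simp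
  also have "\<dots> = of_int a * fact (nat (a - 1))" using fact_int_Suc[OF a1] by simp
  finally show ?thesis using E3_S[OF a1 assms(2,3)] by simp
qed

lemma E3_bm1: assumes "0 \<le> a" "0 \<le> b" "0 \<le> c"
  shows "real_of_int (b * E3 a (b - 1) c) = fact (nat a) * fact (nat b) * fact (nat c) * S a (b - 1) c"
proof (cases "b = 0")
  case True
  then show ?thesis by (simp add: E3_def S_neg_b)
next
  case False
  then have b1: "0 \<le> b - 1" using assms by simp
  have "fact (nat b) = (fact (nat (b - 1 + 1)) :: real)" by simp
  also have "\<dots> = of_int b * fact (nat (b - 1))" using fact_int_Suc[OF b1] by simp
  finally show ?thesis using E3_S[OF assms(1) b1 assms(3)] by simp
qed

lemma E3_ap1: assumes "0 \<le> a" "0 \<le> b" "0 \<le> c"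
  shows "real_of_int (E3 (a + 1) b c) = of_int (a+1) * (fact (nat a) * fact (nat b) * fact (nat c) * S (a + 1) b c)"
  using E3_S[of "a+1" b c] assms fact_int_Suc[OF assms(1)] by simp

lemma E3_bp1: assumes "0 \<le> a" "0 \<le> b" "0 \<le> c"
  shows "real_of_int (E3 a (b + 1) c) = of_int (b+1) * (fact (nat a) * fact (nat b) * fact (nat c) * S a (b + 1) c)"
  using E3_S[of a "b+1" c] assms fact_int_Suc[OF assms(2)] by simp

theorem mainTheorem7:
  fixes a b c :: int
  assumes "a \<ge> 0" "b \<ge> 0" "c \<ge> 0"
  shows "2*(a-b)*E3 a b c + (a-b+c+1)*E3 (a+1) b c + (a-b-c-1)*E3 a (b+1) c = 0 \<and>
         2*a*E3 (a-1) b c + (a-b+c)*E3 a b c + (c-a-b-1)*E3 a (b+1) c = 0 \<and>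
         (a-b)*(a+b-c)*E3 a b c + a*(a-b-c-1)*E3 (a-1) b c + b*(a-b+c+1)*E3 a (b-1) c = 0 \<and>
         (a-b+c+1)*(a+b-c+1)*E3 (a+1) b c + (3*a^2+a-(2*a+1)*(b+c)-(b-c)^2)*E3 a b c
           + 2*a*(a-b-c-1)*E3 (a-1) b c = 0"
proof -
  define K :: real where "K = fact (nat a) * fact (nat b) * fact (nat c)"
  have e0: "real_of_int (E3 a b c) = K * S a b c" using E3_S[OF assms] K_def by simp
  have e1: "real_of_int (E3 (a+1) b c) = of_int (a+1) * (K * S (a + 1) b c)" using E3_ap1[OF assms] K_def by simp
  have e2: "real_of_int (E3 a (b+1) c) = of_int (b+1) * (K * S a (b + 1) c)" using E3_bp1[OF assms] K_def by simp
  have e3: "real_of_int (a * E3 (a-1) b c) = K * S (a - 1) b c" unfolding K_def by (rule E3_am1[OF assms])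
  have e4: "real_of_int (b * E3 a (b-1) c) = K * S a (b - 1) c" unfolding K_def by (rule E3_bm1[OF assms])
  have e3': "real_of_int a * real_of_int (E3 (a-1) b c) = K * S (a - 1) b c" using e3 by (simp only: of_int_mult)
  have e4': "real_of_int b * real_of_int (E3 a (b-1) c) = K * S a (b - 1) c" using e4 by (simp only: of_int_mult)
  have "real_of_int (2*(a-b)*E3 a b c + (a-b+c+1)*E3 (a+1) b c + (a-b-c-1)*E3 a (b+1) c)
     = K * (of_int (2*(a-b)) * S a b c + of_int ((a-b+c+1)*(a+1)) * S (a + 1) b c + of_int ((a-b-c-1)*(b+1)) * S a (b + 1) c)"
    unfolding of_int_add of_int_mult e0 e1 e2 by (simp add: algebra_simps)
  then have g1: "2*(a-b)*E3 a b c + (a-b+c+1)*E3 (a+1) b c + (a-b-c-1)*E3 a (b+1) c = 0"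
    using R1[OF assms(1), of b c] by (simp only: mult_zero_right of_int_eq_0_iff)
  have "real_of_int (2*a*E3 (a-1) b c + (a-b+c)*E3 a b c + (c-a-b-1)*E3 a (b+1) c)
     = K * (of_int (2) * S (a - 1) b c + of_int (a-b+c) * S a b c + of_int ((c-a-b-1)*(b+1)) * S a (b + 1) c)"
  proof -
    have "2*a*E3 (a-1) b c + (a-b+c)*E3 a b c + (c-a-b-1)*E3 a (b+1) c
       = 2*(a*E3 (a-1) b c) + (a-b+c)*E3 a b c + (c-a-b-1)*E3 a (b+1) c" by (simp add: algebra_simps)
    then show ?thesis
      apply (simp only:)
      unfolding of_int_add of_int_mult e0 e2 e3' by (simp add: algebra_simps)
  qed
  then have g2: "2*a*E3 (a-1) b c + (a-b+c)*E3 a b c + (c-a-b-1)*E3 a (b+1) c = 0"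
    using R2[OF assms(1), of b c] by (simp only: mult_zero_right of_int_eq_0_iff)
  have "real_of_int ((a-b)*(a+b-c)*E3 a b c + a*(a-b-c-1)*E3 (a-1) b c + b*(a-b+c+1)*E3 a (b-1) c)
     = K * (of_int ((a-b)*(a+b-c)) * S a b c + of_int (a-b-c-1) * S (a - 1) b c + of_int (a-b+c+1) * S a (b - 1) c)"
  proof -
    have "(a-b)*(a+b-c)*E3 a b c + a*(a-b-c-1)*E3 (a-1) b c + b*(a-b+c+1)*E3 a (b-1) c
      = (a-b)*(a+b-c)*E3 a b c + (a-b-c-1)*(a*E3 (a-1) b c) + (a-b+c+1)*(b*E3 a (b-1) c)" by (simp add: algebra_simps)
    then show ?thesis apply (simp only:)
      unfolding of_int_add of_int_mult e0 e3' e4' by (simp add: algebra_simps)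
  qed
  then have g3: "(a-b)*(a+b-c)*E3 a b c + a*(a-b-c-1)*E3 (a-1) b c + b*(a-b+c+1)*E3 a (b-1) c = 0"
    using R3[OF assms(1), of b c] by (simp only: mult_zero_right of_int_eq_0_iff)
  have "real_of_int ((a-b+c+1)*(a+b-c+1)*E3 (a+1) b c + (3*a^2+a-(2*a+1)*(b+c)-(b-c)^2)*E3 a b c
           + 2*a*(a-b-c-1)*E3 (a-1) b c)
     = K * (of_int ((a-b+c+1)*(a+b-c+1)*(a+1)) * S (a + 1) b c + of_int (3*a^2+a-(2*a+1)*(b+c)-(b-c)^2) * S a b c + of_int (2*(a-b-c-1)) * S (a - 1) b c)"
  proof -
    have "(a-b+c+1)*(a+b-c+1)*E3 (a+1) b c + (3*a^2+a-(2*a+1)*(b+c)-(b-c)^2)*E3 a b c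
           + 2*a*(a-b-c-1)*E3 (a-1) b c = (a-b+c+1)*(a+b-c+1)*E3 (a+1) b c + (3*a^2+a-(2*a+1)*(b+c)-(b-c)^2)*E3 a b c
           + (2*(a-b-c-1))*(a*E3 (a-1) b c)" by (simp add: algebra_simps)
    then show ?thesis
      apply (simp only:)
      unfolding of_int_add of_int_mult e0 e1 e3' by (simp add: algebra_simps)
  qed
  then have g4: "(a-b+c+1)*(a+b-c+1)*E3 (a+1) b c + (3*a^2+a-(2*a+1)*(b+c)-(b-c)^2)*E3 a b c
           + 2*a*(a-b-c-1)*E3 (a-1) b c = 0"
    using R4[OF assms(1), of b c] by (simp only: mult_zero_right of_int_eq_0_iff)
  show ?thesis using g1 g2 g3 g4 by blast
qed

end
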